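(* Let $\mathcal{G}_1$ be an $r_1$-regular graph on $n_1$ vertices and $\mathcal{G}_2$ an $r_2$-regular graph on $n_2$ vertices. Let $\mu_{11},\mu_{12},\ldots,\mu_{1n_1}$ be the Laplacian eigenvalues of $\mathcal{G}_1$. Then the Laplacian characteristic polynomial of $\mathcal{G}_1\circledast\mathcal{G}_2$ satisfies $$f(L_{\mathcal{G}_1\circledast \mathcal{G}_2},x)=(x-r_1n_2-n_2)^{n_1(n_2-1)}\, f(L_{\mathcal{G}_2},x-n_2)^{n_1}\cdot \prod_{i=1}^{n_1}\big[x-n_2-n_2\mu_{1i}-n_2\chi_{L_{\mathcal{G}_2}}(x-n_2)\big].$$
   Context: All graphs are simple, finite and undirected. For a graph $\mathcal{G}$ with adjacency matrix $A_{\mathcal{G}}$ and diagonal degree matrix $D_{\mathcal{G}}$, the Laplacian matrix is $L_{\mathcal{G}}=D_{\mathcal{G}}-A_{\mathcal{G}}$. For a square matrix $M$ of order $n$, $f(M,x)=\det(xI_n-M)$ is its characteristic polynomial. The Laplacian coronal of a graph $\mathcal{G}$ on $n$ vertices is the rational function $\chi_{L_{\mathcal{G}}}(x)=\mathbf{1}_n^T(xI_n-L_{\mathcal{G}})^{-1}\mathbf{1}_n$, where $\mathbf{1}_n$ is the all-ones column vector. The graph product $\mathcal{G}_1\circledast\mathcal{G}_2$ of $\mathcal{G}_1$ (vertices $u_1,\ldots,u_{n_1}$) and $\mathcal{G}_2$ (vertices $v_1,\ldots,v_{n_2}$) has vertex set $\{a_{ik},b_{ik}:1\le i\le n_1,1\le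 k\le n_2\}$ ($2n_1n_2$ vertices) and edges: (1) $a_{ik}a_{jl}$ for all $1\le k,l\le n_2$ whenever $u_iu_j\in E(\mathcal{G}_1)$; (2) $b_{ri}b_{rj}$ for all $1\le r\le n_1$ whenever $v_iv_j\in E(\mathcal{G}_2)$; (3) $a_{ip}b_{iq}$ for all $1\le i\le n_1$ and $1\le p,q\le n_2$. The identity is an identity of rational functions in $x$. *)

theory Defs
  imports "HOL-Analysis.Analysis"
begin

definition simple_graph :: "('v \<Rightarrow> 'v \<Rightarrow> bool) \<Rightarrow> bool" where
  "simple_graph E \<longleftrightarrow> (\<forall>u v. E u v \<longrightarrow> E v u) \<and> (\<forall>v. \<not> E v v)"

definition degree :: "('v \<Rightarrow> 'v \<Rightarrow> bool) \<Rightarrow> 'v \<Rightarrow> nat" where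
  "degree E v = card {w. E v w}"

definition regular :: "('v \<Rightarrow> 'v \<Rightarrow> bool) \<Rightarrow> nat \<Rightarrow> bool" where
  "regular E r \<longleftrightarrow> (\<forall>v. degree E v = r)"

definition laplacian :: "('v::finite \<Rightarrow> 'v \<Rightarrow> bool) \<Rightarrow> real^'v^'v" where
  "laplacian E = (\<chi> i j. (if i = j then real (degree E i) else 0) - (if E i j then 1 else 0))"

definition charpoly :: "real^'n^'n \<Rightarrow> real \<Rightarrow> real" where
  "charpoly M x = det (mat x - M)"

text \<open>Coronal 1^T (xI - M)^{-1} 1 (meaningful where xI - M is invertible).\<close>
definition coronal :: "real^'n^'n \<Rightarrow> real \<Rightarrow> real" where
  "coronal M x = (\<Sum>i\<in>UNIV. \<Sum>j\<in>UNIV. matrix_inv (mat x - M) $ i $ j)"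

text \<open>The product G1 \<circledast> G2 on vertices Inl (i,k) = a_ik and Inr (i,k) = b_ik.\<close>
fun prod_graph :: "('a \<Rightarrow> 'a \<Rightarrow> bool) \<Rightarrow> ('b \<Rightarrow> 'b \<Rightarrow> bool)
    \<Rightarrow> ('a \<times> 'b) + ('a \<times> 'b) \<Rightarrow> ('a \<times> 'b) + ('a \<times> 'b) \<Rightarrow> bool" where
  "prod_graph E1 E2 (Inl (i, k)) (Inl (j, l)) = E1 i j"
| "prod_graph E1 E2 (Inr (r, i)) (Inr (s, j)) = (r = s \<and> E2 i j)"
| "prod_graph E1 E2 (Inl (i, p)) (Inr (j, q)) = (i = j)"
| "prod_graph E1 E2 (Inr (j, q)) (Inl (i, p)) = (i = j)"

end

theory Submission
  imports Defs
begin


definition blk :: "real^'u^'u \<Rightarrow> real^'w^'u \<Rightarrow> real^'u^'w \<Rightarrow> real^'w^'w \<Rightarrow> real^('u+'w)^('u+'w)" where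
  "blk A B C D = (\<chi> x y. case x of Inl i \<Rightarrow> (case y of Inl j \<Rightarrow> A$i$j | Inr j \<Rightarrow> B$i$j)
      | Inr i \<Rightarrow> (case y of Inl j \<Rightarrow> C$i$j | Inr j \<Rightarrow> D$i$j))"

lemma blk_nth [simp]:
  "blk A B C D $ Inl i $ Inl j = A$i$j" "blk A B C D $ Inl i $ Inr j' = B$i$j'"
  "blk A B C D $ Inr i' $ Inl j = C$i'$j" "blk A B C D $ Inr i' $ Inr j' = D$i'$j'"
  by (simp_all add: blk_def)

lemma sum_UNIV_sum: "(\<Sum>z\<in>(UNIV::('u::finite+'w::finite) set). g z) = (\<Sum>i\<in>UNIV. g (Inl i)) + (\<Sum>j\<in>UNIV. g (Inr j))"
  by (subst UNIV_Plus_UNIV[symmetric], subst sum.Plus) (auto simp: o_def)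

lemma blk_eqI: "(\<And>i j. M$Inl i$Inl j = A$i$j) \<Longrightarrow> (\<And>i j. M$Inl i$Inr j = B$i$j)
  \<Longrightarrow> (\<And>i j. M$Inr i$Inl j = C$i$j) \<Longrightarrow> (\<And>i j. M$Inr i$Inr j = D$i$j) \<Longrightarrow> M = blk A B C D"
    unfolding vec_eq_iff
proof (intro allI)
  fix x y assume h: "(\<And>i j. M$Inl i$Inl j = A$i$j)" "(\<And>i j. M$Inl i$Inr j = B$i$j)"
    "(\<And>i j. M$Inr i$Inl j = C$i$j)" "(\<And>i j. M$Inr i$Inr j = D$i$j)"
  show "M$x$y = blk A B C D$x$y"
    by (cases x; cases y) (simp_all add: h)
qed

lemma mm_nth: "(X ** Y)$i$j = (\<Sum>k\<in>UNIV. X$i$k * Y$k$j)"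
  by (simp add: matrix_matrix_mult_def)

lemma blk_mult:
  "blk A B C D ** blk A' B' C' D' = blk (A**A' + B**C') (A**B' + B**D') (C**A'+D**C') (C**B'+D**D')"
  by (rule blk_eqI) (simp_all only: mm_nth sum_UNIV_sum blk_nth vector_add_component)

lemma det_only_id:
  fixes M :: "real^'n^'n"
  assumes "\<And>p. p permutes UNIV \<Longrightarrow> (\<forall>x. M$x$p x \<noteq> 0) \<Longrightarrow> p = id"
  shows "det M = (\<Prod>x\<in>UNIV. M$x$x)"
proof -
  have "det M = (\<Sum>p\<in>{id}. of_int (sign p) * (\<Prod>i\<in>UNIV. M$i$p i))"
    unfolding det_def
  proof (rule sum.mono_neutral_right)
    show "{id} \<subseteq> {p. p permutes UNIV}" by (simp add: permutes_id)
    show "\<forall>i\<in>{p. p permutes UNIV} - {id}. of_int (sign i) * (\<Prod>ia\<in>UNIV. M $ ia $ i ia) = 0"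
    proof
      fix p :: "'n \<Rightarrow> 'n" assume "p \<in> {p. p permutes UNIV} - {id}"
      then have p: "p permutes UNIV" "p \<noteq> id" by auto
      then obtain x where x0: "M$x$p x = 0" using assms by blast
      show "of_int (sign p) * (\<Prod>ia\<in>UNIV. M $ ia $ p ia) = 0"
      proof -
        have "(\<Prod>ia\<in>UNIV. M $ ia $ p ia) = 0" using x0 by (intro prod_zero) auto
        then show ?thesis by simp
      qed
    qed
  qed (simp add: finite_permutations)
  then show ?thesis by simp
qed

lemma det_blk_unip: "det (blk (mat 1) X 0 (mat 1)) = 1"
proof -
  let ?M = "blk (mat 1) X 0 (mat 1)"
  have "det ?M = (\<Prod>x\<in>UNIV. ?M$x$x)"
  proof (rule det_only_id)
    fix p :: "'a+'b \<Rightarrow> 'a+'b" assume p: "p permutes UNIV" and nz: "\<forall>x. ?M$x$p x \<noteq> 0"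
    have r: "p (Inr j) = Inr j" for j
      using nz[rule_format, of "Inr j"] by (cases "p (Inr j)") (auto simp: mat_def split: if_splits)
    have l: "p (Inl i) = Inl i" for i
    proof (cases "p (Inl i)")
      case (Inl a) then show ?thesis using nz[rule_format, of "Inl i"] by (auto simp: mat_def split: if_splits)
    next
      case (Inr b) then have "p (Inl i) = p (Inr b)" using r by simp
      then show ?thesis using permutes_inj[OF p] by (auto dest: injD)
    qed
    show "p = id"
    proof
      fix x show "p x = id x" by (cases x) (simp_all add: l r)
    qed
  qed
  also have "\<dots> = 1"
    apply (rule prod.neutral) apply (rule ballI) subgoal for x by (cases x) (simp_all add: mat_def) done
  finally show ?thesis .
qed

lemma transpose_blk: "transpose (blk A B C D) = blk (transpose A) (transpose C) (transpose B) (transpose D)"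
  by (rule blk_eqI) (auto simp: transpose_def)

lemma transpose_zero [simp]: "transpose (0::real^'n^'m) = 0"
  by (simp add: transpose_def vec_eq_iff)

lemma det_blk_unip_low: "det (blk (mat 1) 0 Y (mat 1)) = 1"
proof -
  have "det (blk (mat 1) 0 Y (mat 1)) = det (transpose (blk (mat 1) 0 Y (mat 1)))" by simp
  also have "\<dots> = det (blk (mat 1) (transpose Y) 0 (mat 1))" by (simp add: transpose_blk)
  also have "\<dots> = 1" by (rule det_blk_unip)
  finally show ?thesis .
qed

definition embed :: "('w \<Rightarrow> 'v) \<Rightarrow> real^'w^'w \<Rightarrow> real^'v^'v" where
  "embed f S = (\<chi> x y. if x \<in> range f \<and> y \<in> range f then S $ inv f x $ inv f y else if x = y then 1 else 0)"

lemma det_embed: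
  fixes f :: "'w::finite \<Rightarrow> 'v::finite"
  assumes f: "inj f"
  shows "det (embed f S) = det S"
proof -
  let ?M = "embed f S"
  let ?g = "map_permutation (UNIV::'w set) f"
  let ?P = "{p. p permutes (UNIV::'v set)}"
  let ?P' = "{p. p permutes (UNIV::'v set) \<and> (\<forall>x. x \<notin> range f \<longrightarrow> p x = x)}"
  let ?Q = "{q. q permutes (UNIV::'w set)}"
  have gq: "?g q y = (if y \<in> range f then f (q (inv f y)) else y)" for q y
    by (simp add: map_permutation_def restrict_id_def)
  have Mnth: "?M $ x $ y = (if x \<in> range f \<and> y \<in> range f then S $ inv f x $ inv f y else if x = y then 1 else 0)" for x y
    by (simp add: embed_def)
  have "det ?M = (\<Sum>p\<in>?P'. of_int (sign p) * (\<Prod>i\<in>UNIV. ?M$i$p i))"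
    unfolding det_def
  proof (rule sum.mono_neutral_right)
    show "finite ?P" by (simp add: finite_permutations)
    show "?P' \<subseteq> ?P" by blast
    show "\<forall>p\<in>?P - ?P'. of_int (sign p) * (\<Prod>i\<in>UNIV. ?M$i$p i) = 0"
    proof
      fix p assume "p \<in> ?P - ?P'"
      then obtain x where x: "x \<notin> range f" "p x \<noteq> x" by auto
      have "?M $ x $ p x = 0" using x by (simp add: Mnth)
      then have "(\<Prod>i\<in>UNIV. ?M$i$p i) = 0" by (intro prod_zero) auto
      then show "of_int (sign p) * (\<Prod>i\<in>UNIV. ?M$i$p i) = 0" by simp
    qed
  qed
  also have "\<dots> = (\<Sum>q\<in>?Q. of_int (sign (?g q)) * (\<Prod>i\<in>UNIV. ?M$i$(?g q) i))"
  proof (rule sum.reindex_bij_betw[symmetric])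
    show "bij_betw ?g ?Q ?P'"
    proof (rule bij_betw_imageI)
      show "inj_on ?g ?Q"
      proof
        fix q1 q2 assume "q1 \<in> ?Q" "q2 \<in> ?Q" "?g q1 = ?g q2"
        then have "?g q1 (f w) = ?g q2 (f w)" for w by simp
        then have "f (q1 w) = f (q2 w)" for w by (simp add: gq f)
        then show "q1 = q2" using f by (auto simp: inj_eq)
      qed
      show "?g ` ?Q = ?P'"
      proof
        show "?g ` ?Q \<subseteq> ?P'"
        proof
          fix p assume "p \<in> ?g ` ?Q"
          then obtain q where q: "q permutes UNIV" "p = ?g q" by auto
          have "bij_betw f UNIV (range f)" using f by (simp add: bij_betw_imageI)
          then have "?g q permutes range f" using q by (intro map_permutation_permutes)
          then have "p permutes UNIV" using q permutes_subset by blast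
          moreover have "\<forall>x. x \<notin> range f \<longrightarrow> p x = x" using q by (simp add: gq)
          ultimately show "p \<in> ?P'" by simp
        qed
        show "?P' \<subseteq> ?g ` ?Q"
        proof
          fix p assume "p \<in> ?P'"
          then have p: "p permutes UNIV" "\<And>x. x \<notin> range f \<Longrightarrow> p x = x" by auto
          have pin: "p y \<in> range f" if "y \<in> range f" for y
          proof (rule ccontr)
            assume "p y \<notin> range f"
            then have "p (p y) = p y" using p(2) by blast
            then have "p y = y" using permutes_inj[OF p(1)] by (auto dest: injD)
            then show False using that \<open>p y \<notin> range f\<close> by simp
          qed
          define q where "q = inv f \<circ> p \<circ> f"
          have fq: "f (q w) = p (f w)" for w
            using pin[of "f w"] by (auto simp: q_def f_inv_into_f)
          have "inj q"
          proof
            fix w1 w2 assume "q w1 = q w2"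
            then have "p (f w1) = p (f w2)" using fq by metis
            then show "w1 = w2" using permutes_inj[OF p(1)] f by (auto dest: injD)
          qed
          then have qp: "q \<in> ?Q" by (auto intro: inj_imp_permutes)
          have "?g q = p"
          proof
            fix y show "?g q y = p y"
              by (cases "y \<in> range f") (auto simp: gq fq f p(2))
          qed
          then show "p \<in> ?g ` ?Q" using qp by blast
        qed
      qed
    qed
  qed
  also have "\<dots> = (\<Sum>q\<in>?Q. of_int (sign q) * (\<Prod>w\<in>UNIV. S$w$q w))"
  proof (rule sum.cong[OF refl])
    fix q assume "q \<in> ?Q"
    then have q: "q permutes UNIV" by simp
    have s: "sign (?g q) = sign q"
      using sign_map_permutation[of f UNIV q] f q by simp
    have "(\<Prod>i\<in>UNIV. ?M$i$(?g q) i) = (\<Prod>i\<in>range f. ?M$i$(?g q) i)"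
      by (rule prod.mono_neutral_right) (auto simp: gq Mnth)
    also have "\<dots> = (\<Prod>w\<in>UNIV. ?M$(f w)$(?g q (f w)))"
      using f by (simp add: prod.reindex)
    also have "\<dots> = (\<Prod>w\<in>UNIV. S$w$q w)"
      by (simp add: gq Mnth f)
    finally show "of_int (sign (?g q)) * (\<Prod>i\<in>UNIV. ?M$i$(?g q) i) = of_int (sign q) * (\<Prod>w\<in>UNIV. S$w$q w)"
      using s by simp
  qed
  also have "\<dots> = det S" by (simp add: det_def)
  finally show ?thesis .
qed

lemma blk_embed_l: "blk A 0 0 (mat 1) = embed Inl A"
  by (rule sym, rule blk_eqI) (auto simp: embed_def mat_def)

lemma blk_embed_r: "blk (mat 1) 0 0 D = embed Inr D"
  by (rule sym, rule blk_eqI) (auto simp: embed_def mat_def)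

lemma det_blk_diag: "det (blk A 0 0 D) = det A * det D"
proof -
  have "blk A 0 0 D = blk A 0 0 (mat 1) ** blk (mat 1) 0 0 D"
    by (simp add: blk_mult)
  then show ?thesis
    by (simp add: det_mul blk_embed_l blk_embed_r det_embed)
qed

lemma minv:
  assumes "invertible D"
  shows "D ** matrix_inv D = mat 1" "matrix_inv D ** D = mat 1"
proof -
  have "\<exists>D'. D ** D' = mat 1 \<and> D' ** D = mat 1" using assms by (simp add: invertible_def)
  then have "D ** matrix_inv D = mat 1 \<and> matrix_inv D ** D = mat 1"
    unfolding matrix_inv_def by (rule someI_ex)
  then show "D ** matrix_inv D = mat 1" "matrix_inv D ** D = mat 1" by auto
qed

lemma schur1:
  assumes "invertible D"
  shows "det (blk A B C D) = det D * det (A - B ** matrix_inv D ** C)"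
proof -
  define Di where "Di = matrix_inv D"
  define S where "S = A - B ** Di ** C"
  have i1: "D ** Di = mat 1" and i2: "Di ** D = mat 1" using minv[OF assms] by (auto simp: Di_def)
  have a1: "B ** Di ** D = B" by (metis matrix_mul_assoc i2 matrix_mul_rid)
  have a2: "D ** (Di ** C) = C" by (metis matrix_mul_assoc i1 matrix_mul_lid)
  have e1: "blk A B C D = blk (mat 1) (B ** Di) 0 (mat 1) ** blk S 0 C D"
    by (simp add: blk_mult a1 S_def)
  have e2: "blk S 0 C D = blk S 0 0 D ** blk (mat 1) 0 (Di ** C) (mat 1)"
    by (simp add: blk_mult a2)
  have "det (blk A B C D) = det (blk S 0 0 D)"
    by (simp add: e1 e2 det_mul det_blk_unip det_blk_unip_low)
  then show ?thesis by (simp add: det_blk_diag S_def Di_def)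
qed

lemma schur2:
  assumes "invertible A"
  shows "det (blk A B C D) = det A * det (D - C ** matrix_inv A ** B)"
proof -
  define Ai where "Ai = matrix_inv A"
  define T where "T = D - C ** Ai ** B"
  have i1: "A ** Ai = mat 1" and i2: "Ai ** A = mat 1" using minv[OF assms] by (auto simp: Ai_def)
  have a1: "C ** Ai ** A = C" by (metis matrix_mul_assoc i2 matrix_mul_rid)
  have a2: "A ** (Ai ** B) = B" by (metis matrix_mul_assoc i1 matrix_mul_lid)
  have e1: "blk A B C D = blk (mat 1) 0 (C ** Ai) (mat 1) ** blk A B 0 T"
    by (simp add: blk_mult a1 T_def)
  have e2: "blk A B 0 T = blk A 0 0 T ** blk (mat 1) (Ai ** B) 0 (mat 1)"
    by (simp add: blk_mult a2)
  have "det (blk A B C D) = det (blk A 0 0 T)"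
    by (simp add: e1 e2 det_mul det_blk_unip det_blk_unip_low)
  then show ?thesis by (simp add: det_blk_diag T_def Ai_def)
qed

lemma mat_mul_l: "mat c ** (M::real^'n^'m) = c *\<^sub>R M"
  unfolding matrix_matrix_mult_def mat_def
  by (auto simp: vec_eq_iff if_distrib if_distribR sum.delta'[OF finite] cong: if_cong)

lemma mat_mul_r: "(M::real^'n^'m) ** mat c = c *\<^sub>R M"
  unfolding matrix_matrix_mult_def mat_def
  by (auto simp: vec_eq_iff if_distrib if_distribR sum.delta'[OF finite] mult.commute cong: if_cong)

lemma neg_mul: "(-U) ** (V::real^'n^'m) = -(U ** V)"
  by (simp add: matrix_matrix_mult_def vec_eq_iff sum_negf)

lemma neg_mul_r: "U ** (-V::real^'n^'m) = -(U ** V)"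
  by (simp add: matrix_matrix_mult_def vec_eq_iff sum_negf)

lemma det_mat: "det (mat c :: real^'n^'n) = c ^ CARD('n)"
  by (subst det_diagonal) (simp_all add: mat_def)

lemma matrix_inv_mat:
  assumes "c \<noteq> 0" shows "invertible (mat c :: real^'n^'n)" "matrix_inv (mat c :: real^'n^'n) = mat (1/c)"
proof -
  have h: "mat c ** mat (1/c) = (mat 1 :: real^'n^'n)" "mat (1/c) ** mat c = (mat 1 :: real^'n^'n)"
    using assms unfolding mat_mul_l by (simp_all add: vec_eq_iff mat_def)
  then show inv: "invertible (mat c :: real^'n^'n)" unfolding invertible_def by blast
  have "matrix_inv (mat c :: real^'n^'n) = mat (1/c) ** (mat c ** matrix_inv (mat c))"
    by (simp add: matrix_mul_assoc h)
  also have "\<dots> = mat (1/c)" using minv[OF inv] by simp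
  finally show "matrix_inv (mat c :: real^'n^'n) = mat (1/c)" .
qed

lemma sylvester_nz:
  fixes U :: "real^'n^'m" and V :: "real^'m^'n"
  assumes c: "c \<noteq> 0"
  shows "det (mat c + U ** V) * c ^ CARD('n) = c ^ CARD('m) * det (mat c + V ** U)"
proof -
  let ?X = "blk (mat c) (-U) V (mat 1)"
  have "det ?X = det (mat 1 :: real^'n^'n) * det (mat c - (-U) ** matrix_inv (mat 1) ** V)"
    by (rule schur1) (simp add: matrix_inv_mat)
  also have "\<dots> = det (mat c + U ** V)"
    using matrix_inv_mat(2)[of "1::real", where 'n='n] by (simp add: neg_mul)
  finally have x1: "det ?X = det (mat c + U ** V)" .
  have "det ?X = det (mat c :: real^'m^'m) * det (mat 1 - V ** matrix_inv (mat c) ** (-U))"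
    by (rule schur2) (simp add: matrix_inv_mat c)
  also have "mat 1 - V ** matrix_inv (mat c) ** (-U) = mat 1 + (1/c) *\<^sub>R (V ** U)"
    using c by (simp add: matrix_inv_mat mat_mul_r neg_mul neg_mul_r scalar_matrix_assoc[symmetric])
  finally have x2: "det ?X = c ^ CARD('m) * det (mat 1 + (1/c) *\<^sub>R (V ** U))" by (simp add: det_mat)
  have "mat c + V ** U = mat c ** (mat 1 + (1/c) *\<^sub>R (V ** U))"
    using c unfolding mat_mul_l by (simp add: vec_eq_iff mat_def algebra_simps)
  then have "det (mat c + V ** U) = c ^ CARD('n) * det (mat 1 + (1/c) *\<^sub>R (V ** U))"
    by (simp add: det_mul det_mat)
  then show ?thesis using x1 x2 by (simp add: algebra_simps)
qed

lemma cont_det: "continuous_on UNIV (\<lambda>c::real. det (mat c + (W::real^'n^'n)))"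
  unfolding det_def apply (simp add: mat_def) apply (intro continuous_intros)
  subgoal for p i by (cases "i = p i") (simp_all add: continuous_on_id)
  done

lemma sylvester:
  fixes U :: "real^'n^'m" and V :: "real^'m^'n"
  assumes le: "CARD('n) \<le> CARD('m)"
  shows "det (mat c + U ** V) = c ^ (CARD('m) - CARD('n)) * det (mat c + V ** U)"
proof -
  define F where "F = (\<lambda>c. det (mat c + U ** V))"
  define G where "G = (\<lambda>c::real. c ^ (CARD('m) - CARD('n)) * det (mat c + V ** U))"
  have eq: "F c = G c" if "c \<noteq> 0" for c
  proof -
    have "c ^ CARD('m) = c ^ (CARD('m) - CARD('n)) * c ^ CARD('n)"
      using le by (simp add: power_add[symmetric])
    then have "F c * c ^ CARD('n) = G c * c ^ CARD('n)"
      using sylvester_nz[OF that, of U V] by (simp add: F_def G_def algebra_simps)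
    then show ?thesis using that by simp
  qed
  show ?thesis
  proof (cases "c = 0")
    case False then show ?thesis using eq by (simp add: F_def G_def)
  next
    case True
    have cF: "continuous_on UNIV F" unfolding F_def by (rule cont_det)
    have cG: "continuous_on UNIV G" unfolding G_def by (intro continuous_intros cont_det)
    have tF: "(F \<longlongrightarrow> F 0) (at 0)" using cF by (simp add: continuous_on_eq_continuous_at isCont_def)
    have tG: "(G \<longlongrightarrow> G 0) (at 0)" using cG by (simp add: continuous_on_eq_continuous_at isCont_def)
    have ev: "eventually (\<lambda>c. G c = F c) (at (0::real))"
      unfolding eventually_at by (rule exI[of _ 1]) (auto simp: eq)
    have "(F \<longlongrightarrow> G 0) (at 0)" using tendsto_cong[OF ev] tG by simp
    then have "F 0 = G 0" using tF by (intro tendsto_unique[of "at (0::real)"]) auto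
    then show ?thesis using True by (simp add: F_def G_def)
  qed
qed

lemma inv_unique:
  fixes A :: "real^'n^'n"
  assumes "A ** B = mat 1" "B ** A = mat 1"
  shows "invertible A" "matrix_inv A = B"
proof -
  show inv: "invertible A" using assms unfolding invertible_def by blast
  have "matrix_inv A = (B ** A) ** matrix_inv A" using assms by simp
  also have "\<dots> = B ** (A ** matrix_inv A)" by (simp add: matrix_mul_assoc)
  also have "\<dots> = B" using minv[OF inv] by simp
  finally show "matrix_inv A = B" .
qed

lemma sum_pair: "(\<Sum>z\<in>(UNIV::('a::finite\<times>'b::finite) set). g z) = (\<Sum>i\<in>UNIV. \<Sum>k\<in>UNIV. g (i,k))"
  by (subst UNIV_Times_UNIV[symmetric], subst sum.cartesian_product) (simp add: case_prod_beta)

definition kron_id :: "real^'b::finite^'b \<Rightarrow> real^('a::finite\<times>'b)^('a\<times>'b)" where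
  "kron_id M = (\<chi> x y. if fst x = fst y then M $ snd x $ snd y else 0)"

lemma kron_id_nth: "kron_id M $ x $ y = (if fst x = fst y then M $ snd x $ snd y else 0)"
  by (simp add: kron_id_def)

lemma kron_id_mult: "kron_id X ** kron_id Y = (kron_id (X ** Y) :: real^('a::finite\<times>'b::finite)^('a\<times>'b))"
proof -
  have "(kron_id X ** kron_id Y) $ x $ y = (kron_id (X ** Y) :: real^('a\<times>'b)^('a\<times>'b)) $ x $ y" for x y :: "'a\<times>'b"
  proof -
    obtain x1 x2 y1 y2 where xy: "x = (x1,x2)" "y = (y1,y2)" by fastforce
    have "(kron_id X ** kron_id Y :: real^('a\<times>'b)^('a\<times>'b)) $ x $ y = (\<Sum>i\<in>UNIV. \<Sum>k\<in>UNIV.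
        (if x1 = i then X $ x2 $ k else 0) * (if i = y1 then Y $ k $ y2 else 0))"
      by (simp add: mm_nth sum_pair kron_id_nth xy cong: if_cong)
    also have "\<dots> = (\<Sum>i\<in>UNIV. if i = x1 then (\<Sum>k\<in>UNIV. X $ x2 $ k * (if i = y1 then Y $ k $ y2 else 0)) else 0)"
      by (rule sum.cong) auto
    also have "\<dots> = (kron_id (X ** Y) :: real^('a\<times>'b)^('a\<times>'b)) $ x $ y"
      by (simp add: xy kron_id_nth mm_nth)
    finally show ?thesis .
  qed
  then show ?thesis by (simp add: vec_eq_iff)
qed

lemma kron_id_1: "kron_id (mat 1) = (mat 1 :: real^('a::finite\<times>'b::finite)^('a\<times>'b))"
  by (auto simp: vec_eq_iff kron_id_nth mat_def prod_eq_iff)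

lemma kron_id_inv:
  assumes "invertible M"
  shows "invertible (kron_id M :: real^('a::finite\<times>'b::finite)^('a\<times>'b))"
    "matrix_inv (kron_id M :: real^('a::finite\<times>'b::finite)^('a\<times>'b)) = kron_id (matrix_inv M)"
  using inv_unique[of "kron_id M :: real^('a\<times>'b)^('a\<times>'b)" "kron_id (matrix_inv M)"]
  by (simp_all add: kron_id_mult minv[OF assms] kron_id_1)



lemma det_kron_id: "det (kron_id M :: real^('a::finite\<times>'b::finite)^('a\<times>'b)) = det M ^ CARD('a)"
proof -
  define T :: "'a set \<Rightarrow> real^('a\<times>'b)^('a\<times>'b)" where
    "T F = (\<chi> x y. if fst x = fst y then (if fst x \<in> F then M$snd x$snd y else (if snd x = snd y then 1 else 0)) else 0)" for F
  have Tn: "T F $ x $ y = (if fst x = fst y then (if fst x \<in> F then M$snd x$snd y else (if snd x = snd y then 1 else 0)) else 0)" for F x y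
    by (simp add: T_def)
  have T0: "T {} = mat 1" by (auto simp: vec_eq_iff Tn mat_def prod_eq_iff)
  have T1: "det (T {a}) = det M" for a
  proof -
    have inj: "inj (\<lambda>k::'b. (a,k))" by (auto intro: injI)
    have r: "x \<in> range (\<lambda>k::'b. (a,k)) \<longleftrightarrow> fst x = a" for x :: "'a\<times>'b" by (cases x) auto
    have iv: "inv (\<lambda>k::'b. (a,k)) x = snd x" if "fst x = a" for x :: "'a\<times>'b"
      using that inv_f_f[OF inj, of "snd x"] by (metis prod.collapse)
    have "T {a} = embed (\<lambda>k. (a,k)) M"
      by (auto simp: vec_eq_iff Tn embed_def r iv prod_eq_iff)
    then show ?thesis using det_embed[OF inj] by simp
  qed
  have Tins: "T (insert a F) = T {a} ** T F" if "a \<notin> F" for a F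
  proof -
    have "(T {a} ** T F) $ x $ y = T (insert a F) $ x $ y" for x y
    proof -
      have "(T {a} ** T F) $ x $ y = (\<Sum>z\<in>UNIV. if z = (if fst x = a then y else x) then T (insert a F) $ x $ y else 0)"
      proof (unfold mm_nth, intro sum.cong refl)
        fix z
        show "T {a} $ x $ z * T F $ z $ y = (if z = (if fst x = a then y else x) then T (insert a F) $ x $ y else 0)"
        proof (cases "fst x = a")
          case True
          then show ?thesis using \<open>a \<notin> F\<close>
            by (cases "fst z = a"; cases "z = y") (auto simp: Tn prod_eq_iff)
        next
          case False
          then show ?thesis by (cases "z = x") (auto simp: Tn prod_eq_iff)
        qed
      qed
      then show ?thesis by simp
    qed
    then show ?thesis by (simp add: vec_eq_iff)
  qed
  have "finite F \<Longrightarrow> det (T F) = det M ^ card F" for F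
  proof (induction F rule: finite_induct)
    case empty then show ?case by (simp add: T0)
  next
    case (insert a F)
    have "det (T (insert a F)) = det (T {a}) * det (T F)"
      unfolding Tins[OF insert(2)] by (rule det_mul)
    then show ?case using insert by (simp add: T1)
  qed
  then have "det (T UNIV) = det M ^ CARD('a)" by simp
  moreover have "T UNIV = kron_id M" by (simp add: vec_eq_iff Tn kron_id_nth)
  ultimately show ?thesis by simp
qed




lemma deg_l:
  fixes E1 :: "'a::finite \<Rightarrow> 'a \<Rightarrow> bool" and E2 :: "'b::finite \<Rightarrow> 'b \<Rightarrow> bool" and k :: 'b
  assumes "regular E1 r1"
  shows "degree (prod_graph E1 E2) (Inl (i,k)) = r1 * CARD('b::finite) + CARD('b)"
proof -
  have "{w. prod_graph E1 E2 (Inl (i,k)) w} = Inl ` ({j. E1 i j} \<times> (UNIV::'b set)) \<union> Inr ` ({i} \<times> UNIV)"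
  proof (rule set_eqI)
    fix w :: "('a \<times> 'b) + ('a \<times> 'b)"
    show "w \<in> {w. prod_graph E1 E2 (Inl (i,k)) w} \<longleftrightarrow> w \<in> Inl ` ({j. E1 i j} \<times> (UNIV::'b set)) \<union> Inr ` ({i} \<times> UNIV)"
      by (cases w) (auto simp: image_iff)
  qed
  moreover have "card (Inl ` ({j. E1 i j} \<times> (UNIV::'b set)) \<union> (Inr ` ({i} \<times> UNIV) :: (('a \<times> 'b) + ('a \<times> 'b)) set)) = r1 * CARD('b) + CARD('b)"
  proof -
    have "card {j. E1 i j} = r1" using assms by (simp add: regular_def degree_def)
    then show ?thesis
      by (subst card_Un_disjoint) (auto simp: card_image card_cartesian_product)
  qed
  ultimately show ?thesis by (simp add: degree_def)
qed

lemma deg_r: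
  fixes E1 :: "'a \<Rightarrow> 'a \<Rightarrow> bool" and E2 :: "'b::finite \<Rightarrow> 'b \<Rightarrow> bool" and i :: 'a
  assumes "regular E2 r2"
  shows "degree (prod_graph E1 E2) (Inr (i,k)) = r2 + CARD('b::finite)"
proof -
  have "{w. prod_graph E1 E2 (Inr (i,k)) w} = Inr ` ({i} \<times> {l. E2 k l}) \<union> Inl ` ({i} \<times> (UNIV::'b set))"
  proof (rule set_eqI)
    fix w :: "('a \<times> 'b) + ('a \<times> 'b)"
    show "w \<in> {w. prod_graph E1 E2 (Inr (i,k)) w} \<longleftrightarrow> w \<in> Inr ` ({i} \<times> {l. E2 k l}) \<union> Inl ` ({i} \<times> (UNIV::'b set))"
      by (cases w) (auto simp: image_iff)
  qed
  moreover have "card (Inr ` ({i} \<times> {l. E2 k l}) \<union> (Inl ` ({i} \<times> (UNIV::'b set)) :: (('a \<times> 'b) + ('a \<times> 'b)) set)) = r2 + CARD('b)"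
  proof -
    have "card {l. E2 k l} = r2" using assms by (simp add: regular_def degree_def)
    then show ?thesis
      by (subst card_Un_disjoint) (auto simp: card_image card_cartesian_product)
  qed
  ultimately show ?thesis by (simp add: degree_def)
qed

theorem theorem1:
  fixes E1 :: "'a::finite \<Rightarrow> 'a \<Rightarrow> bool" and E2 :: "'b::finite \<Rightarrow> 'b \<Rightarrow> bool"
    and r1 r2 :: nat and mu :: "'a \<Rightarrow> real" and x :: real
  assumes "simple_graph E1" and "regular E1 r1"
    and "simple_graph E2" and "regular E2 r2"
    and mu: "\<And>t. charpoly (laplacian E1) t = (\<Prod>i\<in>UNIV. (t - mu i))"
    and x: "charpoly (laplacian E2) (x - real CARD('b)) \<noteq> 0"
  shows "charpoly (laplacian (prod_graph E1 E2)) x =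
    (x - real r1 * real CARD('b) - real CARD('b)) ^ (CARD('a) * (CARD('b) - 1))
    * charpoly (laplacian E2) (x - real CARD('b)) ^ CARD('a)
    * (\<Prod>i\<in>UNIV. (x - real CARD('b) - real CARD('b) * mu i
         - real CARD('b) * coronal (laplacian E2) (x - real CARD('b))))"
proof -
  define n2 where "n2 = real CARD('b)"
  define c where "c = x - real r1 * n2 - n2"
  define M where "M = mat (x - n2) - laplacian E2"
  define Mi where "Mi = matrix_inv M"
  define chi where "chi = coronal (laplacian E2) (x - n2)"
  have chi_def': "chi = (\<Sum>i\<in>UNIV. \<Sum>j\<in>UNIV. Mi $ i $ j)"
    by (simp add: chi_def coronal_def Mi_def M_def)
  define A :: "real^('a\<times>'b)^('a\<times>'b)" where
    "A = (\<chi> p q. (if p = q then c else 0) + (if E1 (fst p) (fst q) then 1 else 0))"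
  define B :: "real^('a\<times>'b)^('a\<times>'b)" where "B = (\<chi> p q. if fst p = fst q then 1 else 0)"
  define D :: "real^('a\<times>'b)^('a\<times>'b)" where "D = kron_id M"
  have r1: "degree E1 i = r1" for i using assms(2) by (simp add: regular_def)
  have r2: "degree E2 i = r2" for i using assms(4) by (simp add: regular_def)
  have dM: "det M = charpoly (laplacian E2) (x - n2)" by (simp add: M_def charpoly_def)
  have invM: "invertible M" using x dM by (simp add: n2_def invertible_det_nz)
  have N: "mat x - laplacian (prod_graph E1 E2) = blk A B B D"
  proof (rule blk_eqI)
    fix p q :: "'a \<times> 'b"
    show "(mat x - laplacian (prod_graph E1 E2)) $ Inl p $ Inl q = A $ p $ q"
      by (cases p; cases q) (auto simp: A_def mat_def laplacian_def deg_l[OF assms(2)] c_def n2_def algebra_simps)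
    show "(mat x - laplacian (prod_graph E1 E2)) $ Inl p $ Inr q = B $ p $ q"
      by (cases p; cases q) (auto simp: B_def mat_def laplacian_def)
    show "(mat x - laplacian (prod_graph E1 E2)) $ Inr p $ Inl q = B $ p $ q"
      by (cases p; cases q) (auto simp: B_def mat_def laplacian_def)
    show "(mat x - laplacian (prod_graph E1 E2)) $ Inr p $ Inr q = D $ p $ q"
      by (cases p; cases q) (auto simp: D_def kron_id_nth M_def mat_def laplacian_def deg_r[OF assms(4)] r2 n2_def algebra_simps)
  qed
  have invD: "invertible D" and DiD: "matrix_inv D = kron_id Mi"
    using kron_id_inv[OF invM] by (simp_all add: D_def Mi_def)
  have detD: "det D = charpoly (laplacian E2) (x - n2) ^ CARD('a)"
    by (simp add: D_def det_kron_id dM)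
  have BM: "B ** kron_id Mi = (\<chi> p q. if fst p = fst q then (\<Sum>l\<in>UNIV. Mi $ l $ snd q) else 0)"
  proof -
    have "(B ** kron_id Mi) $ p $ q = (if fst p = fst q then (\<Sum>l\<in>UNIV. Mi $ l $ snd q) else 0)" for p q :: "'a \<times> 'b"
    proof -
      obtain p1 p2 q1 q2 where pq: "p = (p1,p2)" "q = (q1,q2)" by fastforce
      have "(B ** kron_id Mi) $ p $ q = (\<Sum>i\<in>UNIV. \<Sum>k\<in>UNIV. (if p1 = i then 1 else 0) * (if i = q1 then Mi$k$q2 else 0))"
        by (simp add: mm_nth sum_pair B_def kron_id_nth pq cong: if_cong)
      also have "\<dots> = (\<Sum>i\<in>UNIV. if i = p1 then (\<Sum>k\<in>UNIV. (if i = q1 then Mi$k$q2 else 0)) else 0)"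
        by (rule sum.cong[OF refl]) (simp cong: if_cong)
      also have "\<dots> = (if fst p = fst q then (\<Sum>l\<in>UNIV. Mi $ l $ snd q) else 0)"
        by (cases "p1 = q1") (simp_all add: pq)
      finally show ?thesis .
    qed
    then show ?thesis by (simp add: vec_eq_iff)
  qed
  have BDB: "B ** matrix_inv D ** B = (\<chi> p q. if fst p = fst q then chi else 0)"
  proof -
    have "(B ** kron_id Mi ** B) $ p $ q = (if fst p = fst q then chi else 0)" for p q :: "'a \<times> 'b"
    proof -
      obtain p1 p2 q1 q2 where pq: "p = (p1,p2)" "q = (q1,q2)" by fastforce
      have "(B ** kron_id Mi ** B) $ p $ q = (\<Sum>i\<in>UNIV. \<Sum>k\<in>UNIV. (if p1 = i then (\<Sum>l\<in>UNIV. Mi $ l $ k) else 0) * (if i = q1 then 1 else 0))"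
        unfolding BM by (simp add: mm_nth sum_pair B_def pq cong: if_cong)
      also have "\<dots> = (\<Sum>i\<in>UNIV. if i = p1 then (\<Sum>k\<in>UNIV. (if i = q1 then (\<Sum>l\<in>UNIV. Mi $ l $ k) else 0)) else 0)"
        by (rule sum.cong[OF refl]) (simp cong: if_cong)
      also have "\<dots> = (if fst p = fst q then (\<Sum>k\<in>UNIV. \<Sum>l\<in>UNIV. Mi $ l $ k) else 0)"
        by (cases "p1 = q1") (simp_all add: pq)
      also have "\<dots> = (if fst p = fst q then chi else 0)"
      proof -
        have "(\<Sum>k\<in>UNIV. \<Sum>l\<in>UNIV. Mi $ l $ k) = chi" unfolding chi_def' by (rule sum.swap)
        then show ?thesis by simp
      qed
      finally show ?thesis .
    qed
    then show ?thesis by (simp add: vec_eq_iff DiD)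
  qed
  define K :: "real^'a^'a" where "K = (\<chi> i j. (if E1 i j then 1 else 0) - (if i = j then chi else 0))"
  define U :: "real^'a^('a\<times>'b)" where "U = (\<chi> p j. K $ fst p $ j)"
  define V :: "real^('a\<times>'b)^'a" where "V = (\<chi> j q. if j = fst q then 1 else 0)"
  have UV: "(U ** V) $ p $ q = K $ fst p $ fst q" for p q
    by (simp add: mm_nth U_def V_def if_distrib cong: if_cong)
  have S: "A - B ** matrix_inv D ** B = mat c + U ** V"
    by (simp add: vec_eq_iff BDB UV A_def K_def mat_def)
  have VU: "V ** U = n2 *\<^sub>R K"
  proof -
    have "(V ** U) $ i $ j = n2 * K $ i $ j" for i j
    proof -
      have "(V ** U) $ i $ j = (\<Sum>ia\<in>UNIV. n2 * ((if i = ia then 1 else 0) * K $ ia $ j))"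
        by (simp add: mm_nth sum_pair U_def V_def n2_def cong: if_cong)
      also have "\<dots> = (\<Sum>ia\<in>UNIV. if ia = i then n2 * K $ i $ j else 0)"
        by (rule sum.cong[OF refl]) auto
      also have "\<dots> = n2 * K $ i $ j" by simp
      finally show ?thesis .
    qed
    then show ?thesis by (simp add: vec_eq_iff)
  qed
  have cardab: "CARD('a \<times> 'b) = CARD('a) * CARD('b)"
    by (simp add: UNIV_Times_UNIV[symmetric] card_cartesian_product del: UNIV_Times_UNIV)
  have b1: "CARD('b) \<ge> 1" by (simp add: Suc_le_eq)
  have le: "CARD('a) \<le> CARD('a \<times> 'b)" using b1 cardab by simp
  have ex: "CARD('a \<times> 'b) - CARD('a) = CARD('a) * (CARD('b) - 1)"
    using cardab by (simp add: diff_mult_distrib2)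
  have detS: "det (mat c + U ** V) = c ^ (CARD('a) * (CARD('b) - 1)) * det (mat c + n2 *\<^sub>R K)"
    using sylvester[OF le, of c U V] by (simp only: VU ex)
  define t where "t = (c + n2 * (real r1 - chi)) / n2"
  have n2pos: "n2 > 0" by (simp add: n2_def)
  have KL: "mat c + n2 *\<^sub>R K = mat n2 ** (mat t - laplacian E1)"
    unfolding mat_mul_l using n2pos
    by (auto simp: vec_eq_iff K_def mat_def laplacian_def r1 t_def field_simps)
  have detK: "det (mat c + n2 *\<^sub>R K) = (\<Prod>i\<in>UNIV. (x - n2 - n2 * mu i - n2 * chi))"
  proof -
    have "det (mat c + n2 *\<^sub>R K) = n2 ^ CARD('a) * (\<Prod>i\<in>UNIV. (t - mu i))"
      by (simp add: KL det_mul det_mat mu[unfolded charpoly_def])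
    also have "\<dots> = (\<Prod>i\<in>UNIV. n2 * (t - mu i))"
      by (simp add: prod.distrib)
    also have "\<dots> = (\<Prod>i\<in>UNIV. (x - n2 - n2 * mu i - n2 * chi))"
      using n2pos by (intro prod.cong refl) (simp add: t_def c_def field_simps)
    finally show ?thesis .
  qed
  have "charpoly (laplacian (prod_graph E1 E2)) x = det D * det (A - B ** matrix_inv D ** B)"
    unfolding charpoly_def N by (rule schur1[OF invD])
  also have "\<dots> = charpoly (laplacian E2) (x - n2) ^ CARD('a) * (c ^ (CARD('a) * (CARD('b) - 1)) * (\<Prod>i\<in>UNIV. (x - n2 - n2 * mu i - n2 * chi)))"
    by (simp add: detD S detS detK)
  finally show ?thesis by (simp add: c_def n2_def chi_def algebra_simps)
qed


end
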